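(* Let $\mathcal X$ and $\mathcal Y$ be Polish spaces, let $T:\mathcal X\to\mathcal Y$ be a measurable map, and let $N:\mathcal Y\times\mathcal Y\to[0,\infty)$ be a continuous, bounded pseudo-metric on $\mathcal Y$. Define the pulled-back pseudo-metric $\tilde T(N)$ on $\mathcal X$ by $\tilde T(N)(x,x'):=N(T(x),T(x'))$. Then for all Borel probability measures $a,b$ on $\mathcal X$, $$\mathcal W(N)(T_\# a,\,T_\# b)=\mathcal W(\tilde T(N))(a,b).$$
   Context: For a pseudo-metric (cost) $c$ on a Polish space $\mathcal Z$ and Borel probability measures $\mu,\nu$ on $\mathcal Z$, the Kantorovich (Wasserstein) distance is $\mathcal W(c)(\mu,\nu):=\inf_{\pi\in U(\mu,\nu)}\int_{\mathcal Z\times\mathcal Z} c(z,z')\,d\pi(z,z')$, where $U(\mu,\nu)$ is the set of couplings, i.e. probability measures on $\mathcal Z\times\mathcal Z$ with marginals $\mu$ and $\nu$. $T_\# a$ denotes the push-forward measure $a\circ T^{-1}$. *)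

theory Defs
  imports "HOL-Probability.Probability"
begin

definition pseudo_metric :: "('a \<Rightarrow> 'a \<Rightarrow> real) \<Rightarrow> bool" where
  "pseudo_metric c \<longleftrightarrow>
     (\<forall>x y. 0 \<le> c x y) \<and> (\<forall>x. c x x = 0) \<and> (\<forall>x y. c x y = c y x) \<and>
     (\<forall>x y z. c x z \<le> c x y + c y z)"

definition couplings :: "'a::topological_space measure \<Rightarrow> 'a measure \<Rightarrow> ('a \<times> 'a) measure set" where
  "couplings \<mu> \<nu> = {\<pi>. prob_space \<pi> \<and> sets \<pi> = sets (borel :: ('a \<times> 'a) measure) \<and>
       distr \<pi> borel fst = \<mu> \<and> distr \<pi> borel snd = \<nu>}"

definition wasserstein :: "('a::topological_space \<Rightarrow> 'a \<Rightarrow> real) \<Rightarrow> 'a measure \<Rightarrow> 'a measure \<Rightarrow> ennreal" where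
  "wasserstein c \<mu> \<nu> = (INF \<pi>\<in>couplings \<mu> \<nu>. \<integral>\<^sup>+ z. ennreal (c (fst z) (snd z)) \<partial>\<pi>)"

end

theory Submission
  imports Defs
begin

lemma dense_seq:
  obtains d :: "nat \<Rightarrow> 'a::polish_space" where "\<And>X. open X \<Longrightarrow> X \<noteq> {} \<Longrightarrow> \<exists>n. d n \<in> X"
proof -
  obtain D :: "'a set" where "countable D" and D: "\<And>X. open X \<Longrightarrow> X \<noteq> {} \<Longrightarrow> \<exists>d\<in>D. d \<in> X"
    by (erule countable_dense_setE)
  have "D \<noteq> {}" using D[of UNIV] by auto
  then have "range (from_nat_into D) = D" using \<open>countable D\<close> by (simp add: range_from_nat_into)
  then show ?thesis using D by (intro that[of "from_nat_into D"]) (metis rangeE)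
qed

lemma cont_N1:
  fixes N :: "'y::topological_space \<Rightarrow> 'y \<Rightarrow> real"
  assumes "continuous_on UNIV (\<lambda>(y, y'). N y y')"
  shows "continuous_on UNIV (N c)"
proof -
  have "continuous_on UNIV ((\<lambda>(y, y'). N y y') \<circ> (\<lambda>z. (c, z)))"
    by (intro continuous_on_compose continuous_intros) (auto intro: continuous_on_subset[OF assms])
  then show ?thesis by (simp add: o_def)
qed

lemma meas_N:
  fixes N :: "'y::second_countable_topology \<Rightarrow> 'y \<Rightarrow> real"
  assumes "continuous_on UNIV (\<lambda>(y, y'). N y y')"
  shows "(\<lambda>z. N (fst z) (snd z)) \<in> borel_measurable borel"
proof -
  have "(\<lambda>(y, y'). N y y') \<in> borel_measurable borel"
    using assms by (rule borel_measurable_continuous_onI)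
  moreover have "(\<lambda>(y, y'). N y y') = (\<lambda>z. N (fst z) (snd z))" by auto
  ultimately show ?thesis by simp
qed

lemma easy_dir:
  fixes T :: "'x::polish_space \<Rightarrow> 'y::polish_space"
    and N :: "'y \<Rightarrow> 'y \<Rightarrow> real"
  assumes T_meas: "T \<in> measurable borel borel"
    and N_cont: "continuous_on UNIV (\<lambda>(y, y'). N y y')"
    and pi: "\<pi> \<in> couplings a b"
  shows "distr \<pi> borel (\<lambda>z. (T (fst z), T (snd z))) \<in> couplings (distr a borel T) (distr b borel T)"
    and "(\<integral>\<^sup>+ z. ennreal (N (fst z) (snd z)) \<partial>(distr \<pi> borel (\<lambda>z. (T (fst z), T (snd z)))))
         = (\<integral>\<^sup>+ z. ennreal (N (T (fst z)) (T (snd z))) \<partial>\<pi>)"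
proof -
  have ps: "prob_space \<pi>" and ss: "sets \<pi> = sets borel" and m1: "distr \<pi> borel fst = a"
    and m2: "distr \<pi> borel snd = b" using pi by (auto simp: couplings_def)
  have g0: "(\<lambda>z. (T (fst z), T (snd z))) \<in> measurable (borel \<Otimes>\<^sub>M borel) (borel \<Otimes>\<^sub>M borel)"
    using T_meas by measurable
  have mc: "measurable \<pi> M = measurable borel M" for M :: "'c measure"
    by (rule measurable_cong_sets[OF ss refl])
  have g: "(\<lambda>z. (T (fst z), T (snd z))) \<in> measurable \<pi> borel"
    using g0 unfolding mc borel_prod .
  have bf1: "fst \<in> measurable (borel :: ('y \<times> 'y) measure) borel"
    using measurable_fst[of "borel::'y measure" "borel::'y measure"] unfolding borel_prod .
  have bf2: "snd \<in> measurable (borel :: ('y \<times> 'y) measure) borel"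
    using measurable_snd[of "borel::'y measure" "borel::'y measure"] unfolding borel_prod .
  have f1: "fst \<in> measurable \<pi> borel" 
    using measurable_fst[of "borel::'x measure" "borel::'x measure"] unfolding mc borel_prod .
  have f2: "snd \<in> measurable \<pi> borel"
    using measurable_snd[of "borel::'x measure" "borel::'x measure"] unfolding mc borel_prod .
  have "distr (distr \<pi> borel (\<lambda>z. (T (fst z), T (snd z)))) borel fst = distr \<pi> borel (T \<circ> fst)"
    by (subst distr_distr[OF bf1 g]) (simp add: o_def)
  also have "\<dots> = distr (distr \<pi> borel fst) borel T"
    by (subst distr_distr[OF T_meas f1]) simp
  finally have c1: "distr (distr \<pi> borel (\<lambda>z. (T (fst z), T (snd z)))) borel fst = distr a borel T"
    using m1 by simp
  have "distr (distr \<pi> borel (\<lambda>z. (T (fst z), T (snd z)))) borel snd = distr \<pi> borel (T \<circ> snd)"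
    by (subst distr_distr[OF bf2 g]) (simp add: o_def)
  also have "\<dots> = distr (distr \<pi> borel snd) borel T"
    by (subst distr_distr[OF T_meas f2]) simp
  finally have c2: "distr (distr \<pi> borel (\<lambda>z. (T (fst z), T (snd z)))) borel snd = distr b borel T"
    using m2 by simp
  have "prob_space (distr \<pi> borel (\<lambda>z. (T (fst z), T (snd z))))"
    using ps g by (simp add: prob_space.prob_space_distr)
  then show "distr \<pi> borel (\<lambda>z. (T (fst z), T (snd z))) \<in> couplings (distr a borel T) (distr b borel T)"
    using c1 c2 by (simp add: couplings_def)
  show "(\<integral>\<^sup>+ z. ennreal (N (fst z) (snd z)) \<partial>(distr \<pi> borel (\<lambda>z. (T (fst z), T (snd z)))))
         = (\<integral>\<^sup>+ z. ennreal (N (T (fst z)) (T (snd z))) \<partial>\<pi>)"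
    using meas_N[OF N_cont] g by (subst nn_integral_distr) auto
qed


lemma bind_cells:
  fixes a :: "'x::topological_space measure" and T :: "'x \<Rightarrow> 'y::topological_space"
    and idx :: "'y \<Rightarrow> nat"
  assumes a_prob: "prob_space a" and a_sets: "sets a = sets borel"
    and T_meas: "T \<in> measurable borel borel"
    and idx_meas: "idx \<in> measurable borel (count_space UNIV)"
    and K_def: "\<And>n. K n = (if emeasure a (T -` {y. idx y = n}) = 0 then a
                            else uniform_measure a (T -` {y. idx y = n}))"
  shows "prob_space (K n)" and "sets (K n) = sets borel"
    and "emeasure a (T -` {y. idx y = n}) \<noteq> 0 \<Longrightarrow> AE x in K n. idx (T x) = n"
    and "(\<lambda>y. K (idx y)) \<in> measurable borel (subprob_algebra borel)"
    and "a \<bind> (\<lambda>x. K (idx (T x))) = a"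
    and "emeasure (distr a borel T) {y. emeasure a (T -` {y'. idx y' = idx y}) = 0} = 0"
proof -
  define A where "A n = T -` {y. idx y = n}" for n
  have sa: "space a = UNIV" using sets_eq_imp_space_eq[OF a_sets] by simp
  have C_sets: "{y. idx y = n} \<in> sets borel" for n
    using measurable_sets[OF idx_meas, of "{n}"] by (simp add: vimage_def)
  have A_sets: "A n \<in> sets a" for n
    using measurable_sets[OF T_meas C_sets[of n]] a_sets by (simp add: A_def)
  have fin: "emeasure a (A n) \<noteq> \<infinity>" for n
    using le_less_trans[OF prob_space.emeasure_le_1[OF a_prob, of "A n"] ennreal_one_less_top] by simp
  have Kp: "prob_space (K n)" for n
    using a_prob fin[of n] by (auto simp: K_def A_def intro!: prob_space_uniform_measure)
  show "prob_space (K n)" by (rule Kp)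
  have Ks: "sets (K n) = sets borel" for n
    by (simp add: K_def a_sets)
  show "sets (K n) = sets borel" by (rule Ks)
  show "AE x in K n. idx (T x) = n" if h: "emeasure a (T -` {y. idx y = n}) \<noteq> 0"
  proof -
    have e: "K n = uniform_measure a (A n)" using h K_def[of n] by (simp add: A_def)
    have h': "emeasure a (A n) \<noteq> 0" using h by (simp add: A_def)
    show ?thesis unfolding e using fin[of n] h'
      by (subst AE_uniform_measure) (auto simp: A_def less_top)
  qed
  have Km: "K \<in> measurable (count_space UNIV) (subprob_algebra borel)"
    using Kp Ks by (auto simp: space_subprob_algebra intro: prob_space_imp_subprob_space)
  show KI: "(\<lambda>y. K (idx y)) \<in> measurable borel (subprob_algebra borel)"
    using measurable_comp[OF idx_meas Km] by (simp add: o_def)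
  have mc: "measurable a M = measurable borel M" for M :: "'c measure"
    by (rule measurable_cong_sets[OF a_sets refl])
  have KIT: "(\<lambda>x. K (idx (T x))) \<in> measurable a (subprob_algebra borel)"
    using measurable_comp[OF T_meas KI] unfolding mc by (simp add: o_def)
  have spa: "space a \<noteq> {}" using sa by simp
  show "a \<bind> (\<lambda>x. K (idx (T x))) = a"
  proof (rule measure_eqI)
    show "sets (a \<bind> (\<lambda>x. K (idx (T x)))) = sets a"
      using Ks spa a_sets by simp
    fix S assume "S \<in> sets (a \<bind> (\<lambda>x. K (idx (T x))))"
    then have S: "S \<in> sets borel" using Ks spa by simp
    then have Sa: "S \<in> sets a" using a_sets by simp
    have "emeasure (a \<bind> (\<lambda>x. K (idx (T x)))) S = (\<integral>\<^sup>+x. emeasure (K (idx (T x))) S \<partial>a)"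
      by (rule emeasure_bind[OF spa KIT S])
    also have "\<dots> = (\<integral>\<^sup>+x. (\<Sum>n. emeasure (K n) S * indicator (A n) x) \<partial>a)"
    proof (rule nn_integral_cong)
      fix x
      have "(\<lambda>n. emeasure (K n) S * indicator (A n) x) = (\<lambda>n. if n = idx (T x) then emeasure (K n) S else 0)"
        by (auto simp: A_def indicator_def)
      then show "emeasure (K (idx (T x))) S = (\<Sum>n. emeasure (K n) S * indicator (A n) x)"
        using sums_unique[OF sums_single[of "idx (T x)" "\<lambda>n. emeasure (K n) S"]] by simp
    qed
    also have "\<dots> = (\<Sum>n. \<integral>\<^sup>+x. emeasure (K n) S * indicator (A n) x \<partial>a)"
      by (rule nn_integral_suminf) (use A_sets in measurable)
    also have "\<dots> = (\<Sum>n. emeasure a (A n \<inter> S))"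
    proof (rule suminf_cong)
      fix n
      have "(\<integral>\<^sup>+x. emeasure (K n) S * indicator (A n) x \<partial>a) = emeasure (K n) S * emeasure a (A n)"
        by (rule nn_integral_cmult_indicator[OF A_sets])
      also have "\<dots> = emeasure a (A n \<inter> S)"
      proof (cases "emeasure a (A n) = 0")
        case True
        then have "emeasure a (A n \<inter> S) = 0"
          using emeasure_mono[of "A n \<inter> S" "A n" a] A_sets by simp
        then show ?thesis using True by simp
      next
        case False
        then have "K n = uniform_measure a (A n)" by (simp add: K_def A_def)
        then have "emeasure (K n) S = emeasure a (A n \<inter> S) / emeasure a (A n)"
          using A_sets Sa by simp
        then show ?thesis using False fin[of n]
          by (simp add: ennreal_divide_times less_top)
      qed
      finally show "(\<integral>\<^sup>+x. emeasure (K n) S * indicator (A n) x \<partial>a) = emeasure a (A n \<inter> S)" .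
    qed
    also have "\<dots> = emeasure a (\<Union>n. A n \<inter> S)"
      by (rule suminf_emeasure) (use A_sets Sa in \<open>auto simp: disjoint_family_on_def A_def\<close>)
    also have "(\<Union>n. A n \<inter> S) = S" by (auto simp: A_def)
    finally show "emeasure (a \<bind> (\<lambda>x. K (idx (T x)))) S = emeasure a S" .
  qed
  define Z where "Z = {y. emeasure a (T -` {y'. idx y' = idx y}) = 0}"
  have Z: "Z = idx -` {n. emeasure a (A n) = 0}" by (auto simp: Z_def A_def)
  have Zs: "Z \<in> sets borel"
    using measurable_sets[OF idx_meas, of "{n. emeasure a (A n) = 0}"] by (simp add: Z)
  have "emeasure (distr a borel T) Z = emeasure a (T -` Z \<inter> space a)"
    using T_meas unfolding mc[symmetric] by (rule emeasure_distr[OF _ Zs])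
  also have "T -` Z \<inter> space a = (\<Union>n. if emeasure a (A n) = 0 then A n else {})"
    by (auto simp: Z A_def sa split: if_splits)
  also have "emeasure a \<dots> = 0"
    by (rule emeasure_UN_eq_0) (use A_sets in auto)
  finally show "emeasure (distr a borel T) {y. emeasure a (T -` {y'. idx y' = idx y}) = 0} = 0"
    by (simp add: Z_def)
qed


lemma distr_pair_snd':
  assumes M: "prob_space M" and N: "sigma_finite_measure N"
  shows "distr (M \<Otimes>\<^sub>M N) N snd = N"
proof (intro measure_eqI)
  fix A assume A: "A \<in> sets (distr (M \<Otimes>\<^sub>M N) N snd)"
  then have A': "A \<in> sets N" by simp
  from A have "emeasure (distr (M \<Otimes>\<^sub>M N) N snd) A = emeasure (M \<Otimes>\<^sub>M N) (space M \<times> A)"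
    by (auto simp add: emeasure_distr space_pair_measure dest: sets.sets_into_space intro!: arg_cong2[where f=emeasure])
  with A' show "emeasure (distr (M \<Otimes>\<^sub>M N) N snd) A = emeasure N A"
    by (simp add: sigma_finite_measure.emeasure_pair_measure_Times[OF N] prob_space.emeasure_space_1[OF M])
qed simp

lemma hard_dir:
  fixes T :: "'x::polish_space \<Rightarrow> 'y::polish_space"
    and N :: "'y \<Rightarrow> 'y \<Rightarrow> real"
    and a b :: "'x measure"
  assumes T_meas: "T \<in> measurable borel borel"
    and N_pm: "pseudo_metric N"
    and N_cont: "continuous_on UNIV (\<lambda>(y, y'). N y y')"
    and a_prob: "prob_space a" and a_sets: "sets a = sets borel"
    and b_prob: "prob_space b" and b_sets: "sets b = sets borel"
    and gam: "\<gamma> \<in> couplings (distr a borel T) (distr b borel T)"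
    and e: "0 < e"
  shows "\<exists>\<pi>\<in>couplings a b. (\<integral>\<^sup>+ z. ennreal (N (T (fst z)) (T (snd z))) \<partial>\<pi>)
            \<le> (\<integral>\<^sup>+ z. ennreal (N (fst z) (snd z)) \<partial>\<gamma>) + ennreal e"
proof -
  obtain d :: "nat \<Rightarrow> 'y" where d: "\<And>X. open X \<Longrightarrow> X \<noteq> {} \<Longrightarrow> \<exists>n. d n \<in> X"
    using dense_seq by blast
  define r where "r = e / 4"
  have r: "0 < r" using e by (simp add: r_def)
  have Npos: "\<And>x y. 0 \<le> N x y" and N0: "\<And>x. N x x = 0" and Nsym: "\<And>x y. N x y = N y x"
    and Ntri: "\<And>x y z. N x z \<le> N x y + N y z"
    using N_pm by (auto simp: pseudo_metric_def)
  have ex: "\<exists>n. N (d n) y < r" for y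
  proof -
    have "open {z. N y z < (\<lambda>_. r) z}"
      by (rule open_Collect_less[OF cont_N1[OF N_cont] continuous_on_const])
    moreover have "y \<in> {z. N y z < (\<lambda>_. r) z}" using N0 r by simp
    ultimately obtain n where "d n \<in> {z. N y z < (\<lambda>_. r) z}" using d by blast
    then show ?thesis using Nsym by auto
  qed
  define idx where "idx y = (LEAST n. N (d n) y < r)" for y
  have idx: "N (d (idx y)) y < r" for y
    unfolding idx_def by (rule LeastI_ex[OF ex])
  have diam: "N y z < 2 * r" if "idx y = idx z" for y z
  proof -
    have "N y z \<le> N y (d (idx y)) + N (d (idx y)) z" by (rule Ntri)
    also have "\<dots> < 2 * r" using idx[of y] idx[of z] that Nsym[of y] by simp
    finally show ?thesis .
  qed
  have Nd_meas[measurable]: "N (d i) \<in> borel_measurable borel" for i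
    by (rule borel_measurable_continuous_onI[OF cont_N1[OF N_cont]])
  have idx_meas[measurable]: "idx \<in> measurable borel (count_space UNIV)"
    unfolding idx_def by measurable
  define Ka where "Ka n = (if emeasure a (T -` {y. idx y = n}) = 0 then a
                            else uniform_measure a (T -` {y. idx y = n}))" for n
  define Kb where "Kb n = (if emeasure b (T -` {y. idx y = n}) = 0 then b
                            else uniform_measure b (T -` {y. idx y = n}))" for n
  note KA = bind_cells[OF a_prob a_sets T_meas idx_meas Ka_def]
  note KB = bind_cells[OF b_prob b_sets T_meas idx_meas Kb_def]
  have ps: "prob_space \<gamma>" and ss: "sets \<gamma> = sets borel" and m1: "distr \<gamma> borel fst = distr a borel T"
    and m2: "distr \<gamma> borel snd = distr b borel T" using gam by (auto simp: couplings_def)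
  have mc: "measurable \<gamma> M = measurable borel M" for M :: "'c measure"
    by (rule measurable_cong_sets[OF ss refl])
  have sg: "space \<gamma> = UNIV" using sets_eq_imp_space_eq[OF ss] by simp
  have bf1: "fst \<in> measurable (borel :: ('y \<times> 'y) measure) borel"
    using measurable_fst[of "borel::'y measure" "borel::'y measure"] unfolding borel_prod .
  have bf2: "snd \<in> measurable (borel :: ('y \<times> 'y) measure) borel"
    using measurable_snd[of "borel::'y measure" "borel::'y measure"] unfolding borel_prod .
  have xf1: "fst \<in> measurable (borel :: ('x \<times> 'x) measure) borel"
    using measurable_fst[of "borel::'x measure" "borel::'x measure"] unfolding borel_prod .
  have xf2: "snd \<in> measurable (borel :: ('x \<times> 'x) measure) borel"
    using measurable_snd[of "borel::'x measure" "borel::'x measure"] unfolding borel_prod .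
  have f1: "fst \<in> measurable \<gamma> borel" using bf1 unfolding mc .
  have f2: "snd \<in> measurable \<gamma> borel" using bf2 unfolding mc .
  define H where "H ij = Ka (fst ij) \<Otimes>\<^sub>M Kb (snd ij)" for ij :: "nat \<times> nat"
  have Hp: "prob_space (H ij)" for ij
    unfolding H_def by (rule prob_space_pair[OF KA(1) KB(1)])
  have Hs: "sets (H ij) = sets (borel :: ('x \<times> 'x) measure)" for ij
    unfolding H_def borel_prod[symmetric] by (rule sets_pair_measure_cong[OF KA(2) KB(2)])
  have Hm: "H \<in> measurable (count_space UNIV) (subprob_algebra borel)"
    using Hp Hs by (auto simp: space_subprob_algebra intro: prob_space_imp_subprob_space)
  have g0: "(\<lambda>w. (idx (fst w), idx (snd w))) \<in> measurable (borel \<Otimes>\<^sub>M borel) (count_space UNIV \<Otimes>\<^sub>M count_space UNIV)"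
    by measurable
  have g: "(\<lambda>w. (idx (fst w), idx (snd w))) \<in> measurable \<gamma> (count_space UNIV)"
    using g0 unfolding mc borel_prod pair_measure_countable[OF countableI_type countableI_type] by simp
  define F where "F w = H (idx (fst w), idx (snd w))" for w
  have Fm: "F \<in> measurable \<gamma> (subprob_algebra borel)"
  proof -
    have "F = (\<lambda>w. H (idx (fst w), idx (snd w)))" by (rule ext) (simp add: F_def)
    then show ?thesis using measurable_comp[OF g Hm] by (simp add: o_def)
  qed
  have spg: "space \<gamma> \<noteq> {}" using sg by simp
  define \<pi> where "\<pi> = \<gamma> \<bind> F"
  have \<pi>s: "sets \<pi> = sets (borel :: ('x \<times> 'x) measure)"
    unfolding \<pi>_def using Hs spg by (simp add: F_def)
  have \<pi>p: "prob_space \<pi>"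
    unfolding \<pi>_def by (rule prob_space.prob_space_bind[OF ps _ Fm]) (simp add: F_def Hp)
  have marg1: "distr \<pi> borel fst = a"
  proof -
    have "distr \<pi> borel fst = \<gamma> \<bind> (\<lambda>w. distr (F w) borel fst)"
      unfolding \<pi>_def by (rule distr_bind[OF Fm spg xf1])
    also have "\<dots> = \<gamma> \<bind> (\<lambda>w. Ka (idx (fst w)))"
    proof (rule bind_cong[OF refl])
      fix w
      have "distr (F w) borel fst = distr (Ka (idx (fst w)) \<Otimes>\<^sub>M Kb (idx (snd w))) (Ka (idx (fst w))) fst"
        by (rule distr_cong) (simp_all add: F_def H_def KA(2))
      also have "\<dots> = Ka (idx (fst w))"
        by (rule prob_space.distr_pair_fst[OF KB(1)])
      finally show "distr (F w) borel fst = Ka (idx (fst w))" .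
    qed
    also have "\<dots> = distr \<gamma> borel fst \<bind> (\<lambda>y. Ka (idx y))"
      by (rule bind_distr[OF f1 KA(4) spg, symmetric])
    also have "\<dots> = a \<bind> (\<lambda>x. Ka (idx (T x)))"
      unfolding m1
      by (rule bind_distr) (use T_meas KA(4) measurable_cong_sets[OF a_sets refl] sets_eq_imp_space_eq[OF a_sets] in auto)
    also have "\<dots> = a" by (rule KA(5))
    finally show ?thesis .
  qed
  have marg2: "distr \<pi> borel snd = b"
  proof -
    have "distr \<pi> borel snd = \<gamma> \<bind> (\<lambda>w. distr (F w) borel snd)"
      unfolding \<pi>_def by (rule distr_bind[OF Fm spg xf2])
    also have "\<dots> = \<gamma> \<bind> (\<lambda>w. Kb (idx (snd w)))"
    proof (rule bind_cong[OF refl])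
      fix w
      have "distr (F w) borel snd = distr (Ka (idx (fst w)) \<Otimes>\<^sub>M Kb (idx (snd w))) (Kb (idx (snd w))) snd"
        by (rule distr_cong) (simp_all add: F_def H_def KB(2))
      also have "\<dots> = Kb (idx (snd w))"
        by (rule distr_pair_snd'[OF KA(1) prob_space_imp_sigma_finite[OF KB(1)]])
      finally show "distr (F w) borel snd = Kb (idx (snd w))" .
    qed
    also have "\<dots> = distr \<gamma> borel snd \<bind> (\<lambda>y. Kb (idx y))"
      by (rule bind_distr[OF f2 KB(4) spg, symmetric])
    also have "\<dots> = b \<bind> (\<lambda>x. Kb (idx (T x)))"
      unfolding m2
      by (rule bind_distr) (use T_meas KB(4) measurable_cong_sets[OF b_sets refl] sets_eq_imp_space_eq[OF b_sets] in auto)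
    also have "\<dots> = b" by (rule KB(5))
    finally show ?thesis .
  qed
  have \<pi>c: "\<pi> \<in> couplings a b"
    using \<pi>s \<pi>p marg1 marg2 by (simp add: couplings_def)
  have gT: "(\<lambda>z. (T (fst z), T (snd z))) \<in> measurable (borel :: ('x \<times> 'x) measure) borel"
  proof -
    have "(\<lambda>z. (T (fst z), T (snd z))) \<in> measurable (borel \<Otimes>\<^sub>M borel) (borel \<Otimes>\<^sub>M borel)"
      using T_meas by measurable
    then show ?thesis unfolding borel_prod .
  qed
  have cm0[measurable]: "(\<lambda>z. N (T (fst z)) (T (snd z))) \<in> borel_measurable (borel :: ('x \<times> 'x) measure)"
    using measurable_comp[OF gT meas_N[OF N_cont]] by (simp add: o_def)
  have cm: "(\<lambda>z. ennreal (N (T (fst z)) (T (snd z)))) \<in> borel_measurable (borel :: ('x \<times> 'x) measure)"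
    by measurable
  have Nm0[measurable]: "(\<lambda>w. N (fst w) (snd w)) \<in> borel_measurable \<gamma>"
    using meas_N[OF N_cont] unfolding mc .
  have Nm: "(\<lambda>w. ennreal (N (fst w) (snd w))) \<in> borel_measurable \<gamma>"
    by measurable
  have Za_s: "{y. emeasure a (T -` {y'. idx y' = idx y}) = 0} \<in> sets borel"
    using measurable_sets[OF idx_meas, of "{n. emeasure a (T -` {y. idx y = n}) = 0}"] by (simp add: vimage_def)
  have Zb_s: "{y. emeasure b (T -` {y'. idx y' = idx y}) = 0} \<in> sets borel"
    using measurable_sets[OF idx_meas, of "{n. emeasure b (T -` {y. idx y = n}) = 0}"] by (simp add: vimage_def)
  have nulla: "fst -` {y. emeasure a (T -` {y'. idx y' = idx y}) = 0} \<in> null_sets \<gamma>"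
  proof -
    have "emeasure \<gamma> (fst -` {y. emeasure a (T -` {y'. idx y' = idx y}) = 0} \<inter> space \<gamma>) = 0"
      using emeasure_distr[OF f1 Za_s] KA(6) m1 by simp
    moreover have "fst -` {y. emeasure a (T -` {y'. idx y' = idx y}) = 0} \<inter> space \<gamma> \<in> sets \<gamma>"
      by (rule measurable_sets[OF f1 Za_s])
    ultimately show ?thesis using sg by (simp add: null_sets_def)
  qed
  have nullb: "snd -` {y. emeasure b (T -` {y'. idx y' = idx y}) = 0} \<in> null_sets \<gamma>"
  proof -
    have "emeasure \<gamma> (snd -` {y. emeasure b (T -` {y'. idx y' = idx y}) = 0} \<inter> space \<gamma>) = 0"
      using emeasure_distr[OF f2 Zb_s] KB(6) m2 by simp
    moreover have "snd -` {y. emeasure b (T -` {y'. idx y' = idx y}) = 0} \<inter> space \<gamma> \<in> sets \<gamma>"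
      by (rule measurable_sets[OF f2 Zb_s])
    ultimately show ?thesis using sg by (simp add: null_sets_def)
  qed
  have ae: "AE w in \<gamma>. emeasure a (T -` {y. idx y = idx (fst w)}) \<noteq> 0 \<and>
                       emeasure b (T -` {y. idx y = idx (snd w)}) \<noteq> 0"
    by (rule AE_I'[OF null_sets.Un[OF nulla nullb]]) auto
  have "(\<integral>\<^sup>+ z. ennreal (N (T (fst z)) (T (snd z))) \<partial>\<pi>)
        = (\<integral>\<^sup>+ w. (\<integral>\<^sup>+ z. ennreal (N (T (fst z)) (T (snd z))) \<partial>F w) \<partial>\<gamma>)"
    unfolding \<pi>_def by (rule nn_integral_bind[OF cm Fm])
  also have "\<dots> \<le> (\<integral>\<^sup>+ w. ennreal (N (fst w) (snd w)) + ennreal e \<partial>\<gamma>)"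
  proof (rule nn_integral_mono_AE)
    show "AE w in \<gamma>. (\<integral>\<^sup>+ z. ennreal (N (T (fst z)) (T (snd z))) \<partial>F w) \<le> ennreal (N (fst w) (snd w)) + ennreal e"
      using ae
    proof (rule eventually_mono)
      fix w assume hw: "emeasure a (T -` {y. idx y = idx (fst w)}) \<noteq> 0 \<and>
                       emeasure b (T -` {y. idx y = idx (snd w)}) \<noteq> 0"
      define i where "i = idx (fst w)"
      define j where "j = idx (snd w)"
      interpret P: pair_sigma_finite "Ka i" "Kb j"
        by (simp add: pair_sigma_finite_def prob_space_imp_sigma_finite KA(1) KB(1))
      have setm0: "{z \<in> space (borel \<Otimes>\<^sub>M borel). idx (T (fst z)) = i \<and> idx (T (snd z)) = j} \<in> sets (borel \<Otimes>\<^sub>M borel)"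
        using T_meas by measurable
      have sK: "sets (Ka i \<Otimes>\<^sub>M Kb j) = sets (borel \<Otimes>\<^sub>M borel)"
        by (rule sets_pair_measure_cong[OF KA(2) KB(2)])
      have spK: "space (Ka i \<Otimes>\<^sub>M Kb j) = UNIV"
        using sets_eq_imp_space_eq[OF sK] by (simp add: space_pair_measure)
      have aeP: "AE z in Ka i \<Otimes>\<^sub>M Kb j. idx (T (fst z)) = i \<and> idx (T (snd z)) = j"
      proof (rule P.AE_pair_measure)
        show "{x \<in> space (Ka i \<Otimes>\<^sub>M Kb j). idx (T (fst x)) = i \<and> idx (T (snd x)) = j} \<in> sets (Ka i \<Otimes>\<^sub>M Kb j)"
          using setm0 sK spK by (simp add: space_pair_measure)
        have a1: "AE x in Ka i. idx (T x) = i" using KA(3)[of i] hw unfolding i_def by simp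
        have b1: "AE y in Kb j. idx (T y) = j" using KB(3)[of j] hw unfolding j_def by simp
        show "AE x in Ka i. AE y in Kb j. idx (T (fst (x, y))) = i \<and> idx (T (snd (x, y))) = j"
          using a1 by (rule eventually_mono) (use b1 in \<open>auto elim: eventually_mono\<close>)
      qed
      have bnd: "ennreal (N (T (fst z)) (T (snd z))) \<le> ennreal (N (fst w) (snd w) + e)"
        if hz: "idx (T (fst z)) = i \<and> idx (T (snd z)) = j" for z
      proof (rule ennreal_leI)
        have d1: "N (T (fst z)) (fst w) < 2 * r" using diam hz by (simp add: i_def)
        have d2: "N (snd w) (T (snd z)) < 2 * r" using diam hz by (simp add: j_def)
        have "N (T (fst z)) (T (snd z)) \<le> N (T (fst z)) (fst w) + N (fst w) (T (snd z))" by (rule Ntri)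
        also have "N (fst w) (T (snd z)) \<le> N (fst w) (snd w) + N (snd w) (T (snd z))" by (rule Ntri)
        finally show "N (T (fst z)) (T (snd z)) \<le> N (fst w) (snd w) + e"
          using d1 d2 by (simp add: r_def)
      qed
      have Fw: "F w = Ka i \<Otimes>\<^sub>M Kb j" by (simp add: F_def H_def i_def j_def)
      have "(\<integral>\<^sup>+ z. ennreal (N (T (fst z)) (T (snd z))) \<partial>F w)
           \<le> (\<integral>\<^sup>+ z. ennreal (N (fst w) (snd w) + e) \<partial>F w)"
        unfolding Fw by (rule nn_integral_mono_AE) (use aeP bnd in \<open>auto elim: eventually_mono\<close>)
      also have "\<dots> = ennreal (N (fst w) (snd w) + e)"
        using prob_space.emeasure_space_1[OF Hp[of "(i, j)"]] by (simp add: Fw H_def)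
      also have "\<dots> = ennreal (N (fst w) (snd w)) + ennreal e"
        using Npos e by (simp add: ennreal_plus)
      finally show "(\<integral>\<^sup>+ z. ennreal (N (T (fst z)) (T (snd z))) \<partial>F w) \<le> ennreal (N (fst w) (snd w)) + ennreal e" .
    qed
  qed
  also have "\<dots> = (\<integral>\<^sup>+ w. ennreal (N (fst w) (snd w)) \<partial>\<gamma>) + (\<integral>\<^sup>+ w. ennreal e \<partial>\<gamma>)"
    by (rule nn_integral_add) (use Nm in auto)
  also have "(\<integral>\<^sup>+ w. ennreal e \<partial>\<gamma>) = ennreal e"
    using prob_space.emeasure_space_1[OF ps] by simp
  finally show ?thesis using \<pi>c by blast
qed


theorem mainTheorem1:
  fixes T :: "'x::polish_space \<Rightarrow> 'y::polish_space"
    and N :: "'y \<Rightarrow> 'y \<Rightarrow> real"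
    and a b :: "'x measure"
  assumes T_meas: "T \<in> measurable borel borel"
    and N_pm: "pseudo_metric N"
    and N_cont: "continuous_on UNIV (\<lambda>(y, y'). N y y')"
    and N_bdd: "\<exists>B. \<forall>y y'. N y y' \<le> B"
    and a_prob: "prob_space a" and a_sets: "sets a = sets borel"
    and b_prob: "prob_space b" and b_sets: "sets b = sets borel"
  shows "wasserstein N (distr a borel T) (distr b borel T)
           = wasserstein (\<lambda>x x'. N (T x) (T x')) a b"
proof (rule antisym)
  show "wasserstein N (distr a borel T) (distr b borel T) \<le> wasserstein (\<lambda>x x'. N (T x) (T x')) a b"
    unfolding wasserstein_def
  proof (rule INF_greatest)
    fix \<pi> assume pi: "\<pi> \<in> couplings a b"
    have "(INF \<gamma>\<in>couplings (distr a borel T) (distr b borel T). \<integral>\<^sup>+ z. ennreal (N (fst z) (snd z)) \<partial>\<gamma>)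
          \<le> (\<integral>\<^sup>+ z. ennreal (N (fst z) (snd z)) \<partial>(distr \<pi> borel (\<lambda>z. (T (fst z), T (snd z)))))"
      by (rule INF_lower[OF easy_dir(1)[OF T_meas N_cont pi]])
    also have "\<dots> = (\<integral>\<^sup>+ z. ennreal (N (T (fst z)) (T (snd z))) \<partial>\<pi>)"
      by (rule easy_dir(2)[OF T_meas N_cont pi])
    finally show "(INF \<gamma>\<in>couplings (distr a borel T) (distr b borel T). \<integral>\<^sup>+ z. ennreal (N (fst z) (snd z)) \<partial>\<gamma>)
          \<le> (\<integral>\<^sup>+ z. ennreal ((\<lambda>x x'. N (T x) (T x')) (fst z) (snd z)) \<partial>\<pi>)" by simp
  qed
  show "wasserstein (\<lambda>x x'. N (T x) (T x')) a b \<le> wasserstein N (distr a borel T) (distr b borel T)"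
    unfolding wasserstein_def
  proof (rule INF_greatest)
    fix \<gamma> assume gam: "\<gamma> \<in> couplings (distr a borel T) (distr b borel T)"
    show "(INF \<pi>\<in>couplings a b. \<integral>\<^sup>+ z. ennreal ((\<lambda>x x'. N (T x) (T x')) (fst z) (snd z)) \<partial>\<pi>)
          \<le> (\<integral>\<^sup>+ z. ennreal (N (fst z) (snd z)) \<partial>\<gamma>)"
    proof (rule ennreal_le_epsilon)
      fix e :: real assume e: "0 < e"
      obtain \<pi> where pi: "\<pi> \<in> couplings a b"
        and le: "(\<integral>\<^sup>+ z. ennreal (N (T (fst z)) (T (snd z))) \<partial>\<pi>)
            \<le> (\<integral>\<^sup>+ z. ennreal (N (fst z) (snd z)) \<partial>\<gamma>) + ennreal e"
        using hard_dir[OF T_meas N_pm N_cont a_prob a_sets b_prob b_sets gam e] by blast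
      have "(INF \<pi>\<in>couplings a b. \<integral>\<^sup>+ z. ennreal ((\<lambda>x x'. N (T x) (T x')) (fst z) (snd z)) \<partial>\<pi>)
            \<le> (\<integral>\<^sup>+ z. ennreal (N (T (fst z)) (T (snd z))) \<partial>\<pi>)"
        by (rule INF_lower[OF pi])
      then show "(INF \<pi>\<in>couplings a b. \<integral>\<^sup>+ z. ennreal ((\<lambda>x x'. N (T x) (T x')) (fst z) (snd z)) \<partial>\<pi>)
            \<le> (\<integral>\<^sup>+ z. ennreal (N (fst z) (snd z)) \<partial>\<gamma>) + ennreal e"
        using le by (rule order_trans)
    qed
  qed
qed

end
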